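(* Let $\Gamma$ be a finite simplicial graph with no SIL, and let $v,x,y$ be distinct vertices with $v\le x$ and $v\le y$. Then $x$ and $y$ commute in $\mathbb{A}_\Gamma$ (i.e. are adjacent).
   Context: $\mathbb{A}_\Gamma$ is the right-angled Artin group on $\Gamma$. $\mathrm{lk}(u)$ = neighbours of $u$, $\mathrm{st}(u)=\mathrm{lk}(u)\cup\{u\}$; $u\le v$ iff $\mathrm{lk}(u)\subseteq\mathrm{st}(v)$. A SIL is a triple $(x,y\mid z)$ of pairwise non-adjacent vertices such that the component of $\Gamma\setminus(\mathrm{lk}(x)\cap\mathrm{lk}(y))$ containing $z$ contains neither $x$ nor $y$. *)

theory Defs
  imports Main
begin

definition finite_simple_graph :: "'a set \<Rightarrow> ('a \<Rightarrow> 'a \<Rightarrow> bool) \<Rightarrow> bool" where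
  "finite_simple_graph V E \<longleftrightarrow> finite V \<and>
     (\<forall>a b. E a b \<longrightarrow> a \<in> V \<and> b \<in> V) \<and>
     (\<forall>a b. E a b \<longrightarrow> E b a) \<and> (\<forall>a. \<not> E a a)"

definition lk :: "'a set \<Rightarrow> ('a \<Rightarrow> 'a \<Rightarrow> bool) \<Rightarrow> 'a \<Rightarrow> 'a set" where
  "lk V E u = {w \<in> V. E u w}"

definition st :: "'a set \<Rightarrow> ('a \<Rightarrow> 'a \<Rightarrow> bool) \<Rightarrow> 'a \<Rightarrow> 'a set" where
  "st V E u = lk V E u \<union> {u}"

definition dom_le :: "'a set \<Rightarrow> ('a \<Rightarrow> 'a \<Rightarrow> bool) \<Rightarrow> 'a \<Rightarrow> 'a \<Rightarrow> bool" where
  "dom_le V E u v \<longleftrightarrow> lk V E u \<subseteq> st V E v"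

definition component :: "'a set \<Rightarrow> ('a \<Rightarrow> 'a \<Rightarrow> bool) \<Rightarrow> 'a \<Rightarrow> 'a set" where
  "component S E z = {w. z \<in> S \<and> (\<lambda>a b. E a b \<and> a \<in> S \<and> b \<in> S)\<^sup>*\<^sup>* z w}"

definition is_SIL :: "'a set \<Rightarrow> ('a \<Rightarrow> 'a \<Rightarrow> bool) \<Rightarrow> 'a \<Rightarrow> 'a \<Rightarrow> 'a \<Rightarrow> bool" where
  "is_SIL V E x y z \<longleftrightarrow> x \<in> V \<and> y \<in> V \<and> z \<in> V \<and>
     x \<noteq> y \<and> x \<noteq> z \<and> y \<noteq> z \<and>
     \<not> E x y \<and> \<not> E x z \<and> \<not> E y z \<and>
     (let C = component (V - (lk V E x \<inter> lk V E y)) E z in x \<notin> C \<and> y \<notin> C)"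

definition no_SIL :: "'a set \<Rightarrow> ('a \<Rightarrow> 'a \<Rightarrow> bool) \<Rightarrow> bool" where
  "no_SIL V E \<longleftrightarrow> (\<forall>x y z. \<not> is_SIL V E x y z)"

end

theory Submission
  imports Defs
begin

theorem lemma4p3:
  fixes V :: "'a set" and E :: "'a \<Rightarrow> 'a \<Rightarrow> bool" and v x y :: 'a
  assumes "finite_simple_graph V E"
    and "no_SIL V E"
    and "v \<in> V" and "x \<in> V" and "y \<in> V"
    and "v \<noteq> x" and "v \<noteq> y" and "x \<noteq> y"
    and "dom_le V E v x" and "dom_le V E v y"
  shows "E x y"
proof (rule ccontr)
  assume nxy: "\<not> E x y"
  have sym: "\<And>a b. E a b \<Longrightarrow> E b a" and irr: "\<And>a. \<not> E a a"
    and inV: "\<And>a b. E a b \<Longrightarrow> a \<in> V \<and> b \<in> V"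
    using assms(1) unfolding finite_simple_graph_def by blast+
  have vx: "\<not> E v x"
  proof
    assume "E v x"
    then have "x \<in> lk V E v" using assms(4) unfolding lk_def by auto
    then have "x \<in> st V E y" using assms(10) unfolding dom_le_def by auto
    then show False using nxy assms(8) sym unfolding st_def lk_def by auto
  qed
  have vy: "\<not> E v y"
  proof
    assume "E v y"
    then have "y \<in> lk V E v" using assms(5) unfolding lk_def by auto
    then have "y \<in> st V E x" using assms(9) unfolding dom_le_def by auto
    then show False using nxy assms(8) sym unfolding st_def lk_def by auto
  qed
  define L where "L = lk V E x \<inter> lk V E y"
  have lkv: "\<And>b. E v b \<Longrightarrow> b \<in> L"
  proof -
    fix b assume b: "E v b"
    then have bl: "b \<in> lk V E v" using inV unfolding lk_def by auto
    then have "b \<in> st V E x" "b \<in> st V E y" using assms(9,10) unfolding dom_le_def by auto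
    moreover have "b \<noteq> x" "b \<noteq> y" using b vx vy by auto
    ultimately show "b \<in> L" unfolding L_def st_def by auto
  qed
  have comp: "\<And>w. w \<in> component (V - L) E v \<Longrightarrow> w = v"
  proof -
    fix w assume "w \<in> component (V - L) E v"
    then have "(\<lambda>a b. E a b \<and> a \<in> V - L \<and> b \<in> V - L)\<^sup>*\<^sup>* v w"
      unfolding component_def by auto
    then show "w = v"
    proof (induction rule: rtranclp_induct)
      case base then show ?case by simp
    next
      case (step b c) then show ?case using lkv by auto
    qed
  qed
  have "is_SIL V E x y v"
    unfolding is_SIL_def Let_def L_def[symmetric]
    using assms(3-8) nxy vx vy sym comp by metis
  then show False using assms(2) unfolding no_SIL_def by blast
qed

end
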